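(* Let $N\in\mathbb N$, $p>1$, and $\mathfrak h_{p,N}(x)=\sum_{n\in\mathbb Z,\ |x-n|>N}|\mathrm{sinc}(x-n)|^p$ for $x\in\mathbb R$. (a) If $N\ge \frac1\pi\sqrt{(p+2)(1+p^{-1})}-\frac12$, then $x=1/2$ is a local maximum point of $\mathfrak h_{p,N}$. (b) If $p\le \frac18\big(9\pi^2+\sqrt{16-216\pi^2+81\pi^4}-12\big)\ (\approx 19.1019)$, then $x=1/2$ is a local maximum point of $\mathfrak h_{p,N}$ for every $N\in\mathbb N$.
   Context: $\mathrm{sinc}(x)=\frac{\sin(\pi x)}{\pi x}$ for $x\neq0$ and $\mathrm{sinc}(0)=1$. *)

theory Defs
  imports "HOL-Analysis.Analysis"
begin

definition sinc :: "real \<Rightarrow> real" where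
  "sinc x = (if x = 0 then 1 else sin (pi * x) / (pi * x))"

definition hpN :: "real \<Rightarrow> nat \<Rightarrow> real \<Rightarrow> real" where
  "hpN p N x = infsum (\<lambda>n::int. \<bar>sinc (x - of_int n)\<bar> powr p) {n::int. \<bar>x - of_int n\<bar> > real N}"

definition local_max_point :: "(real \<Rightarrow> real) \<Rightarrow> real \<Rightarrow> bool" where
  "local_max_point f a \<longleftrightarrow> (\<exists>d>0. \<forall>x. \<bar>x - a\<bar> < d \<longrightarrow> f x \<le> f a)"

end

theory Submission
  imports Defs
begin


lemma tangent_powr:
  fixes x y q :: real
  assumes "0 < y" "0 < x" "0 \<le> q"
  shows "y powr (-q) - q * y powr (-q-1) * (x - y) \<le> x powr (-q)"
proof -
  have xy: "x powr (-q) = y powr (-q) * exp (-q * ln (x/y))"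
    using assms by (simp add: powr_def ln_div exp_add[symmetric] algebra_simps exp_diff exp_minus field_simps)
  have "1 - q * ln (x/y) \<le> exp (-q * ln (x/y))" using exp_ge_add_one_self[of "-q * ln (x/y)"] by simp
  moreover have "ln (x/y) \<le> x/y - 1" using assms by (intro ln_le_minus_one) simp
  hence "1 - q * (x/y - 1) \<le> 1 - q * ln (x/y)" using assms(3) by (simp add: mult_left_mono)
  ultimately have "1 - q * (x/y - 1) \<le> exp (-q * ln (x/y))" by linarith
  hence "y powr (-q) * (1 - q * (x/y - 1)) \<le> x powr (-q)"
    unfolding xy by (intro mult_left_mono) auto
  moreover have "y powr (-q) * (1 - q * (x/y - 1)) = y powr (-q) - q * y powr (-q-1) * (x - y)"
  proof -
    have "y powr (-q-1) = y powr (-q) / y" using assms by (simp add: powr_diff)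
    thus ?thesis using assms by (simp add: field_simps)
  qed
  ultimately show ?thesis by simp
qed

lemma sin_ge_x_cos:
  fixes x :: real
  assumes "0 \<le> x" "x \<le> pi"
  shows "x * cos x \<le> sin x"
proof -
  have "(\<lambda>u. sin u - u * cos u) 0 \<le> (\<lambda>u. sin u - u * cos u) x"
  proof (rule DERIV_nonneg_imp_nondecreasing[OF assms(1)])
    fix u assume u: "0 \<le> u" "u \<le> x"
    show "\<exists>y. ((\<lambda>u. sin u - u * cos u) has_real_derivative y) (at u) \<and> 0 \<le> y"
      apply (rule exI[of _ "u * sin u"])
      apply (intro conjI)
       apply (rule derivative_eq_intros refl | simp)+
      using u assms by (auto intro!: mult_nonneg_nonneg sin_ge_zero)
  qed
  thus ?thesis by simp
qed



lemma F_deriv: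
  fixes a p s :: real
  assumes "cos (pi * s) > 0" "a + s > 0" "a - s > 0"
  shows "((\<lambda>s. cos (pi * s) powr p * ((a + s) powr (-p) + (a - s) powr (-p))) has_real_derivative
     (p * cos (pi * s) powr (p-1) * (-(sin (pi * s) * pi)) * ((a + s) powr (-p) + (a - s) powr (-p))
      + cos (pi * s) powr p * (-p * (a + s) powr (-p-1) + p * (a - s) powr (-p-1)))) (at s)"
proof -
  have d1: "((\<lambda>s. cos (pi * s)) has_real_derivative (-(sin (pi * s) * pi))) (at s)"
    by (auto intro!: derivative_eq_intros)
  have d2: "((\<lambda>s. a + s) has_real_derivative 1) (at s)"
    by (auto intro!: derivative_eq_intros)
  have d3: "((\<lambda>s. a - s) has_real_derivative -1) (at s)"
    by (auto intro!: derivative_eq_intros)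
  note e1 = DERIV_fun_powr[OF d1 assms(1), of p]
  note e2 = DERIV_fun_powr[OF d2 assms(2), of "-p"]
  note e3 = DERIV_fun_powr[OF d3 assms(3), of "-p"]
  note e4 = DERIV_mult[OF e1 DERIV_add[OF e2 e3]]
  show ?thesis by (rule DERIV_cong[OF e4]) (simp add: algebra_simps)
qed



lemma key_term:
  fixes a b p t :: real
  assumes p: "p > 1" and ab: "b \<le> a" and b: "1 \<le> b" and t: "0 \<le> t" "t \<le> 1/4"
    and Phi: "\<forall>s. 0 \<le> s \<and> s \<le> t \<longrightarrow> (p+1) * (b/(b-s)) powr p / (b-s)^2 \<le> pi^2"
  shows "cos (pi * t) powr p * ((a + t) powr (-p) + (a - t) powr (-p)) \<le> 2 * a powr (-p)"
proof -
  define F where "F = (\<lambda>s. cos (pi * s) powr p * ((a + s) powr (-p) + (a - s) powr (-p)))"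
  have F0: "F 0 = 2 * a powr (-p)" unfolding F_def by simp
  have "F t \<le> F 0"
  proof (rule DERIV_nonpos_imp_nonincreasing[OF t(1)])
    fix s assume s: "0 \<le> s" "s \<le> t"
    have ps: "pi * s \<le> pi * (1/4)" "0 \<le> pi * s" using s t pi_gt3 by (auto intro: mult_left_mono)
    have c: "cos (pi * s) > 0"
      using ps pi_gt3 by (intro cos_gt_zero_pi) auto
    have as1: "a + s > 0" "a - s > 0" using s t ab b by auto
    define c1 where "c1 = cos (pi * s)"
    define sn where "sn = sin (pi * s)"
    define A where "A = (a + s) powr (-p)"
    define B where "B = (a - s) powr (-p)"
    define C1 where "C1 = (a + s) powr (-p-1)"
    define C2 where "C2 = (a - s) powr (-p-1)"
    have apos: "a > 0" using ab b by auto
    have i: "pi * s * c1 \<le> sn" unfolding c1_def sn_def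
      using ps pi_gt3 by (intro sin_ge_x_cos) (auto)
    have ii: "2 * a powr (-p) \<le> A + B"
    proof -
      have "a powr (-p) - p * a powr (-p-1) * ((a+s) - a) \<le> A"
        unfolding A_def using tangent_powr[of a "a+s" p] apos as1 p by simp
      moreover have "a powr (-p) - p * a powr (-p-1) * ((a-s) - a) \<le> B"
        unfolding B_def using tangent_powr[of a "a-s" p] apos as1 p by simp
      ultimately show ?thesis by (simp add: algebra_simps)
    qed
    have iii: "C2 - C1 \<le> (p+1) * (2 * s) * (a - s) powr (-p-2)"
    proof -
      have eq1: "-(p+1) = -p-1" and eq2: "-(p+1)-1 = -p-2" by simp_all
      note T = tangent_powr[of "a-s" "a+s" "p+1", unfolded eq2, unfolded eq1]
      have "(a-s) powr (-p-1) - (p+1) * (a-s) powr (-p-2) * ((a+s) - (a-s)) \<le> (a+s) powr (-p-1)"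
        using T as1 p by simp
      thus ?thesis unfolding C1_def C2_def by (simp add: algebra_simps)
    qed
    have iv: "(p+1) * (a - s) powr (-p-2) \<le> pi^2 * a powr (-p)"
    proof -
      have bs: "b - s > 0" using s t b by auto
      have id: "(a - s) powr (-p-2) = a powr (-p) * ((a/(a-s)) powr p / (a-s)^2)"
        using apos as1 by (simp add: powr_divide powr_diff powr_minus field_simps)
      have m1: "(a/(a-s)) powr p \<le> (b/(b-s)) powr p"
        using apos as1 bs ab s p by (intro powr_mono2) (auto simp: field_simps mult_right_mono)
      have m2: "1/(a-s)^2 \<le> 1/(b-s)^2"
        using bs ab by (intro divide_left_mono power_mono) (auto)
      have "(a/(a-s)) powr p / (a-s)^2 \<le> (b/(b-s)) powr p / (b-s)^2"
      proof -
        have "(a/(a-s)) powr p * (1/(a-s)^2) \<le> (b/(b-s)) powr p * (1/(b-s)^2)"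
          by (rule mult_mono[OF m1 m2]) auto
        thus ?thesis by simp
      qed
      hence "(p+1) * ((a/(a-s)) powr p / (a-s)^2) \<le> pi^2"
        using Phi s p by (smt (verit, best) mult_left_mono times_divide_eq_right)
      hence "a powr (-p) * ((p+1) * ((a/(a-s)) powr p / (a-s)^2)) \<le> a powr (-p) * pi^2"
        by (intro mult_left_mono) auto
      thus ?thesis unfolding id by (simp add: algebra_simps)
    qed
    have key: "c1 * (C2 - C1) - pi * sn * (A + B) \<le> 0"
    proof -
      have c1p: "c1 > 0" using c c1_def by simp
      have ABp: "A + B \<ge> 0" unfolding A_def B_def by simp
      have "c1 * (C2 - C1) \<le> c1 * ((p+1) * (2 * s) * (a - s) powr (-p-2))"
        using iii c1p by (intro mult_left_mono) auto
      also have "\<dots> = c1 * (2 * s) * ((p+1) * (a - s) powr (-p-2))" by (simp add: algebra_simps)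
      also have "\<dots> \<le> c1 * (2 * s) * (pi^2 * a powr (-p))"
        using iv c1p s by (intro mult_left_mono) auto
      also have "\<dots> = (pi * s * c1) * pi * (2 * a powr (-p))" by (simp add: algebra_simps power2_eq_square)
      also have "\<dots> \<le> (pi * s * c1) * pi * (A + B)"
        using ii c1p s by (intro mult_left_mono) auto
      also have "\<dots> \<le> sn * pi * (A + B)"
        using i ABp by (intro mult_right_mono) auto
      finally show ?thesis by (simp add: algebra_simps)
    qed
    have "p * cos (pi * s) powr (p-1) * (-(sin (pi * s) * pi)) * ((a + s) powr (-p) + (a - s) powr (-p))
      + cos (pi * s) powr p * (-p * (a + s) powr (-p-1) + p * (a - s) powr (-p-1))
      = p * c1 powr (p-1) * (c1 * (C2 - C1) - pi * sn * (A + B))"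
    proof -
      have "c1 powr p = c1 powr (p-1) * c1" using c c1_def by (simp add: powr_diff)
      thus ?thesis unfolding c1_def sn_def A_def B_def C1_def C2_def by (simp add: algebra_simps)
    qed
    also have "\<dots> \<le> 0" using key p by (intro mult_nonneg_nonpos) auto
    finally show "\<exists>y. (F has_real_derivative y) (at s) \<and> y \<le> 0"
      unfolding F_def using F_deriv[OF c as1] by blast
  qed
  thus ?thesis using F0 unfolding F_def by simp
qed



lemma delta_exists:
  fixes p b :: real
  assumes p: "p > 1" and b: "1 \<le> b" and cond: "p + 1 < pi^2 * b^2"
  shows "\<exists>d>0. d \<le> 1/4 \<and> (\<forall>s. 0 \<le> s \<and> s < d \<longrightarrow> (p+1) * (b/(b-s)) powr p / (b-s)^2 \<le> pi^2)"
proof -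
  define P where "P = (\<lambda>s::real. (p+1) * (b/(b-s)) powr p / (b-s)^2)"
  have "isCont P 0" unfolding P_def using b by (intro continuous_intros) auto
  hence "(P \<longlongrightarrow> P 0) (at 0)" by (simp add: isCont_def)
  moreover have "P 0 < pi^2" unfolding P_def using b cond by (simp add: field_simps)
  ultimately have "eventually (\<lambda>s. P s < pi^2) (at 0)" by (rule order_tendstoD)
  then obtain d where d: "d > 0" "\<And>s. s \<noteq> 0 \<Longrightarrow> dist s 0 < d \<Longrightarrow> P s < pi^2"
    unfolding eventually_at by blast
  show ?thesis
  proof (intro exI[of _ "min d (1/4)"] conjI allI impI)
    fix s assume s: "0 \<le> s \<and> s < min d (1/4)"
    show "(p+1) * (b/(b-s)) powr p / (b-s)^2 \<le> pi^2"
    proof (cases "s = 0")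
      case True thus ?thesis using \<open>P 0 < pi^2\<close> unfolding P_def by simp
    next
      case False thus ?thesis using d(2)[of s] s unfolding P_def by (simp add: dist_real_def)
    qed
  qed (use d in auto)
qed

lemma key_term_abs:
  fixes a b p t d :: real
  assumes p: "p > 1" and ab: "b \<le> a" and b: "1 \<le> b" and d: "d \<le> 1/4"
    and Phi: "\<forall>s. 0 \<le> s \<and> s < d \<longrightarrow> (p+1) * (b/(b-s)) powr p / (b-s)^2 \<le> pi^2"
    and t: "\<bar>t\<bar> < d"
  shows "cos (pi * t) powr p * ((a + t) powr (-p) + (a - t) powr (-p)) \<le> 2 * a powr (-p)"
proof (cases "t \<ge> 0")
  case True
  show ?thesis by (rule key_term[OF p ab b True]) (use t d Phi in auto)
next
  case False
  have "cos (pi * (-t)) powr p * ((a + (-t)) powr (-p) + (a - (-t)) powr (-p)) \<le> 2 * a powr (-p)"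
    by (rule key_term[OF p ab b]) (use t d Phi False in auto)
  thus ?thesis by (simp add: algebra_simps)
qed



lemma summ_nat:
  fixes p :: real assumes p: "p > 1"
  shows "(\<lambda>k::nat. (real k + 1/2) powr (-p)) summable_on UNIV"
proof -
  have s0: "summable (\<lambda>n. real n powr (-p))" using p by (subst summable_real_powr_iff) auto
  hence s1: "summable (\<lambda>n. real (Suc n) powr (-p))" by (subst summable_Suc_iff)
  hence s2: "summable (\<lambda>n. 2 powr p * real (Suc n) powr (-p))" by (rule summable_mult)
  have "summable (\<lambda>k::nat. (real k + 1/2) powr (-p))"
  proof (rule summable_comparison_test'[OF s2])
    fix n :: nat
    have "(real n + 1/2) powr (-p) \<le> (real (Suc n) / 2) powr (-p)"
      using p by (intro powr_mono2') auto
    also have "\<dots> = 2 powr p * real (Suc n) powr (-p)"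
      by (simp add: powr_divide powr_minus field_simps del: of_nat_Suc)
    finally show "norm ((real n + 1/2) powr (-p)) \<le> 2 powr p * real (Suc n) powr (-p)" by simp
  qed
  thus ?thesis by (subst summable_on_UNIV_nonneg_real_iff) auto
qed

lemma summ_int:
  fixes p :: real assumes p: "p > 1"
  shows "(\<lambda>n::int. \<bar>1/2 - real_of_int n\<bar> powr (-p)) summable_on UNIV"
proof -
  define g where "g = (\<lambda>n::int. \<bar>1/2 - real_of_int n\<bar> powr (-p))"
  have A: "g summable_on (range (\<lambda>k::nat. int k + 1))"
  proof (subst summable_on_reindex)
    show "inj_on (\<lambda>k::nat. int k + 1) UNIV" by (auto simp: inj_on_def)
    have "(g \<circ> (\<lambda>k::nat. int k + 1)) = (\<lambda>k::nat. (real k + 1/2) powr (-p))"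
      by (auto simp: g_def fun_eq_iff add.commute)
    thus "(g \<circ> (\<lambda>k::nat. int k + 1)) summable_on UNIV" using summ_nat[OF p] by simp
  qed
  have B: "g summable_on (range (\<lambda>k::nat. - int k))"
  proof (subst summable_on_reindex)
    show "inj_on (\<lambda>k::nat. - int k) UNIV" by (auto simp: inj_on_def)
    have "(g \<circ> (\<lambda>k::nat. - int k)) = (\<lambda>k::nat. (real k + 1/2) powr (-p))"
      by (auto simp: g_def fun_eq_iff add.commute)
    thus "(g \<circ> (\<lambda>k::nat. - int k)) summable_on UNIV" using summ_nat[OF p] by simp
  qed
  have U: "range (\<lambda>k::nat. int k + 1) \<union> range (\<lambda>k::nat. - int k) = UNIV"
  proof -
    { fix n :: int
      have "n \<in> range (\<lambda>k::nat. int k + 1) \<union> range (\<lambda>k::nat. - int k)"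
      proof (cases "n \<ge> 1")
        case True thus ?thesis by (auto intro!: image_eqI[of _ _ "nat (n - 1)"])
      next
        case False thus ?thesis by (auto intro!: image_eqI[of _ _ "nat (- n)"])
      qed }
    thus ?thesis by auto
  qed
  have "g summable_on (range (\<lambda>k::nat. int k + 1) \<union> range (\<lambda>k::nat. - int k))"
    by (rule summable_on_Un_disjoint[OF A B]) auto
  thus ?thesis unfolding U g_def .
qed



lemma idx:
  fixes t :: real and n :: int and N :: nat
  assumes t: "\<bar>t\<bar> < 1/2"
  shows "real N < \<bar>1/2 + t - of_int n\<bar> \<longleftrightarrow> (n \<le> - int N \<or> n \<ge> int N + 1)"
proof (cases "n \<le> 0")
  case True
  hence abs: "\<bar>1/2 + t - of_int n\<bar> = 1/2 + t - of_int n" using t by auto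
  have "n \<le> - int N \<longleftrightarrow> real_of_int n \<le> - real N" by linarith
  moreover have "\<not> n \<le> - int N \<longleftrightarrow> real_of_int n \<ge> 1 - real N" by linarith
  ultimately show ?thesis unfolding abs using True t by auto
next
  case False
  hence abs: "\<bar>1/2 + t - of_int n\<bar> = of_int n - 1/2 - t" using t by auto
  have "n \<ge> int N + 1 \<longleftrightarrow> real_of_int n \<ge> real N + 1" by linarith
  moreover have "\<not> n \<ge> int N + 1 \<longleftrightarrow> real_of_int n \<le> real N" by linarith
  ultimately show ?thesis unfolding abs using False t by auto
qed

lemma abs_sin_shift:
  fixes t :: real and n :: int
  shows "\<bar>sin (pi * (1/2 + t - of_int n))\<bar> = \<bar>cos (pi * t)\<bar>"
proof -
  have e: "pi * (1/2 + t - of_int n) = (pi/2 + pi * t) - of_int n * pi" by (simp add: algebra_simps)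
  have s0: "sin (of_int n * pi) = 0" by (auto simp: sin_zero_iff_int2)
  hence c1: "\<bar>cos (of_int n * pi)\<bar> = 1" using sin_cos_squared_add[of "of_int n * pi"]
    by (simp add: abs_square_eq_1 power2_eq_square[symmetric])
  have "sin (pi/2 + pi * t) = cos (pi * t)" by (simp add: sin_add)
  thus ?thesis unfolding e sin_diff s0 using c1 by (simp add: abs_mult)
qed

lemma term_formula:
  fixes t p :: real and n :: int
  assumes t: "\<bar>t\<bar> < 1/4"
  shows "\<bar>sinc (1/2 + t - of_int n)\<bar> powr p = (cos (pi * t) / pi) powr p * \<bar>1/2 + t - of_int n\<bar> powr (-p)"
proof -
  define y where "y = 1/2 + t - of_int n"
  have "y \<noteq> 0"
  proof
    assume "y = 0"
    hence "of_int n = 1/2 + t" unfolding y_def by simp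
    hence "real_of_int n > 1/4" "real_of_int n < 3/4" using t by auto
    hence "n > 0" "n < 1" by linarith+
    thus False by simp
  qed
  have cpos: "cos (pi * t) > 0"
  proof (rule cos_gt_zero_pi)
    have "\<bar>pi * t\<bar> \<le> pi * (1/4)" using t pi_gt3 by (simp add: abs_mult)
    thus "- (pi / 2) < pi * t" "pi * t < pi / 2" using pi_gt3 by linarith+
  qed
  have "\<bar>sinc y\<bar> = cos (pi * t) / (pi * \<bar>y\<bar>)"
    using \<open>y \<noteq> 0\<close> abs_sin_shift[of t n] cpos unfolding sinc_def y_def
    by (simp add: abs_mult abs_divide)
  hence "\<bar>sinc y\<bar> powr p = (cos (pi * t) / pi / \<bar>y\<bar>) powr p" by (simp add: field_simps)
  also have "\<dots> = (cos (pi * t) / pi) powr p * \<bar>y\<bar> powr (-p)"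
  proof -
    have "(cos (pi * t) / pi / \<bar>y\<bar>) powr p = (cos (pi * t) / pi) powr p / \<bar>y\<bar> powr p"
      by (rule powr_divide)
    thus ?thesis by (simp add: powr_minus divide_inverse)
  qed
  finally show ?thesis unfolding y_def .
qed



lemma absA: "\<bar>t::real\<bar> < 1/4 \<Longrightarrow> r \<le> 0 \<Longrightarrow> \<bar>1/2 + t - r\<bar> = \<bar>1/2 - r\<bar> + t \<and> \<bar>1/2 + -t - r\<bar> = \<bar>1/2 - r\<bar> - t"
  by (auto simp: abs_if split: if_splits)
lemma absB: "\<bar>t::real\<bar> < 1/4 \<Longrightarrow> r \<ge> 1 \<Longrightarrow> \<bar>1/2 + t - r\<bar> = \<bar>1/2 - r\<bar> - t \<and> \<bar>1/2 + -t - r\<bar> = \<bar>1/2 - r\<bar> + t"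
  by (auto simp: abs_if split: if_splits)


lemma main_lm:
  fixes p :: real and N :: nat
  assumes p: "p > 1" and N: "N \<ge> 1" and cond: "p + 1 < pi^2 * (real N + 1/2)^2"
  shows "local_max_point (hpN p N) (1/2)"
proof -
  define b where "b = real N + 1/2"
  have b1: "1 \<le> b" using N unfolding b_def by simp
  obtain d where d: "d > 0" "d \<le> 1/4"
      and Phi: "\<forall>s. 0 \<le> s \<and> s < d \<longrightarrow> (p+1) * (b/(b-s)) powr p / (b-s)^2 \<le> pi^2"
    using delta_exists[OF p b1] cond unfolding b_def by blast
  define I where "I = {n::int. \<bar>1/2 - real_of_int n\<bar> > real N}"
  define g where "g = (\<lambda>t n. \<bar>1/2 + t - real_of_int n\<bar> powr (-p))"
  have hform: "hpN p N (1/2 + t) = (cos (pi * t) / pi) powr p * infsum (g t) I" if t: "\<bar>t\<bar> < 1/4" for t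
  proof -
    have setq: "{n::int. \<bar>1/2 + t - of_int n\<bar> > real N} = I"
      unfolding I_def using idx[of t N] idx[of 0 N] t by auto
    have "hpN p N (1/2 + t) = infsum (\<lambda>n. (cos (pi * t) / pi) powr p * g t n) I"
      unfolding hpN_def setq g_def using term_formula[OF t, where p=p] by simp
    also have "\<dots> = (cos (pi * t) / pi) powr p * infsum (g t) I"
      by (rule infsum_cmult_right') 
    finally show ?thesis .
  qed
  have s0: "g 0 summable_on I"
    using summable_on_subset[OF summ_int[OF p], of I] unfolding g_def by simp
  have sg: "g t summable_on I" if t: "\<bar>t\<bar> < 1/4" for t
  proof (rule summable_on_comparison_test)
    show "(\<lambda>n. 2 powr p * g 0 n) summable_on I" by (rule summable_on_cmult_right[OF s0])
    fix n assume "n \<in> I"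
    have a12: "\<bar>1/2 - real_of_int n\<bar> \<ge> 1/2"
    proof (cases "n \<le> 0")
      case True hence "real_of_int n \<le> 0" by simp thus ?thesis by simp
    next
      case False hence "real_of_int n \<ge> 1" by simp thus ?thesis by simp
    qed
    have ge: "\<bar>1/2 + t - real_of_int n\<bar> \<ge> \<bar>1/2 - real_of_int n\<bar> / 2" 
    proof -
      have "\<bar>(1/2 + t - real_of_int n) + (-t)\<bar> \<le> \<bar>1/2 + t - real_of_int n\<bar> + \<bar>-t\<bar>"
        by (rule abs_triangle_ineq)
      thus ?thesis using t a12 by simp
    qed
    have "g t n \<le> (\<bar>1/2 - real_of_int n\<bar> / 2) powr (-p)"
      unfolding g_def using ge a12 p by (intro powr_mono2') auto
    also have "\<dots> = \<bar>1/2 - real_of_int n\<bar> powr (-p) / 2 powr (-p)" by (rule powr_divide)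
    also have "\<dots> = 2 powr p * g 0 n" unfolding g_def powr_minus_divide[of 2 p] by simp
    finally show "g t n \<le> 2 powr p * g 0 n" .
    show "0 \<le> g t n" unfolding g_def by simp
  qed
  have refl: "infsum (g (-t)) I = infsum (g t) I" for t
  proof -
    have bij: "bij_betw (\<lambda>n::int. 1 - n) I I"
      by (rule bij_betwI[where g="\<lambda>n. 1 - n"]) (auto simp: I_def abs_minus_commute)
    have "infsum (\<lambda>n. g t (1 - n)) I = infsum (g t) I" by (rule infsum_reindex_bij_betw[OF bij])
    moreover have "(\<lambda>n. g t (1 - n)) = g (-t)"
      unfolding g_def by (auto simp: fun_eq_iff abs_minus_commute algebra_simps)
    ultimately show ?thesis by simp
  qed
  have ineq: "cos (pi * t) powr p * infsum (g t) I \<le> infsum (g 0) I" if t: "\<bar>t\<bar> < d" for t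
  proof -
    have t4: "\<bar>t\<bar> < 1/4" and t4': "\<bar>-t\<bar> < 1/4" using t d by auto
    have "2 * infsum (g t) I = infsum (\<lambda>n. g t n + g (-t) n) I"
      using infsum_add[OF sg[OF t4] sg[OF t4']] refl[of t] by simp
    hence "cos (pi * t) powr p * (2 * infsum (g t) I) = infsum (\<lambda>n. cos (pi * t) powr p * (g t n + g (-t) n)) I"
      by (simp add: infsum_cmult_right')
    also have "\<dots> \<le> infsum (\<lambda>n. 2 * g 0 n) I"
    proof (rule infsum_mono)
      show "(\<lambda>n. cos (pi * t) powr p * (g t n + g (- t) n)) summable_on I"
        by (intro summable_on_cmult_right summable_on_add sg t4 t4')
      show "(\<lambda>n. 2 * g 0 n) summable_on I" by (intro summable_on_cmult_right s0)
      fix n assume n: "n \<in> I"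
      define a where "a = \<bar>1/2 - real_of_int n\<bar>"
      have nc: "n \<le> - int N \<or> n \<ge> int N + 1" using n idx[of 0 N n] unfolding I_def by simp
      have ab: "b \<le> a"
      proof (cases "n \<le> - int N")
        case True hence "real_of_int n \<le> - real N" by linarith
        thus ?thesis unfolding a_def b_def by simp
      next
        case False hence "real_of_int n \<ge> real N + 1" using nc by linarith
        thus ?thesis unfolding a_def b_def by simp
      qed
      have K: "cos (pi * t) powr p * ((a + t) powr (-p) + (a - t) powr (-p)) \<le> 2 * a powr (-p)"
        by (rule key_term_abs[OF p ab b1 d(2) Phi t])
      have "g t n + g (-t) n = (a + t) powr (-p) + (a - t) powr (-p)"
      proof (cases "n \<le> 0")
        case True hence "real_of_int n \<le> 0" by simp
        hence q1: "\<bar>1/2 + t - real_of_int n\<bar> = a + t" and q2: "\<bar>1/2 + -t - real_of_int n\<bar> = a - t"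
          using absA[OF t4] unfolding a_def by blast+
        show ?thesis unfolding g_def q1 q2 by (simp only:)
      next
        case False hence "real_of_int n \<ge> 1" by simp
        hence q1: "\<bar>1/2 + t - real_of_int n\<bar> = a - t" and q2: "\<bar>1/2 + -t - real_of_int n\<bar> = a + t"
          using absB[OF t4] unfolding a_def by blast+
        show ?thesis unfolding g_def q1 q2 by (simp only: add.commute)
      qed
      moreover have "g 0 n = a powr (-p)" unfolding g_def a_def by simp
      ultimately show "cos (pi * t) powr p * (g t n + g (- t) n) \<le> 2 * g 0 n" using K by simp
    qed
    also have "\<dots> = 2 * infsum (g 0) I" by (simp add: infsum_cmult_right')
    finally show ?thesis by simp
  qed
  show ?thesis unfolding local_max_point_def
  proof (intro exI[of _ d] conjI allI impI)
    show "d > 0" by (rule d)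
    fix x :: real assume x: "\<bar>x - 1/2\<bar> < d"
    define t where "t = x - 1/2"
    have t: "\<bar>t\<bar> < d" and t4: "\<bar>t\<bar> < 1/4" using x d unfolding t_def by auto
    have xe: "x = 1/2 + t" unfolding t_def by simp
    have cpos: "cos (pi * t) \<ge> 0"
    proof (rule cos_ge_zero)
      have "\<bar>pi * t\<bar> \<le> pi * (1/4)" using t4 pi_gt3 by (simp add: abs_mult)
      thus "- (pi / 2) \<le> pi * t" "pi * t \<le> pi / 2" using pi_gt3 by linarith+
    qed
    have "hpN p N x = (cos (pi * t) / pi) powr p * infsum (g t) I" unfolding xe by (rule hform[OF t4])
    also have "\<dots> = (cos (pi * t) powr p * infsum (g t) I) / pi powr p" by (simp add: powr_divide)
    also have "\<dots> \<le> infsum (g 0) I / pi powr p"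
      by (intro divide_right_mono ineq t) auto
    also have "\<dots> = hpN p N (1/2)" using hform[of 0] by (simp add: powr_divide)
    finally show "hpN p N x \<le> hpN p N (1/2)" .
  qed
qed



theorem corollary1:
  fixes p :: real
  assumes "p > 1"
  shows "(\<forall>N::nat. N \<ge> 1 \<and> real N \<ge> sqrt ((p + 2) * (1 + 1 / p)) / pi - 1 / 2
            \<longrightarrow> local_max_point (hpN p N) (1 / 2))
       \<and> (p \<le> (9 * pi^2 + sqrt (16 - 216 * pi^2 + 81 * pi^4) - 12) / 8
            \<longrightarrow> (\<forall>N::nat. N \<ge> 1 \<longrightarrow> local_max_point (hpN p N) (1 / 2)))"
proof (intro conjI allI impI)
  fix N :: nat
  assume h: "N \<ge> 1 \<and> real N \<ge> sqrt ((p + 2) * (1 + 1 / p)) / pi - 1 / 2"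
  define X where "X = (p + 2) * (1 + 1 / p)"
  have Xp: "X \<ge> 0" using assms unfolding X_def by simp
  have "sqrt X \<le> pi * (real N + 1/2)" using h pi_gt3 unfolding X_def by (simp add: field_simps)
  hence "(sqrt X)^2 \<le> (pi * (real N + 1/2))^2" using Xp by (intro power_mono) auto
  hence "X \<le> pi^2 * (real N + 1/2)^2" using Xp by (simp add: power_mult_distrib)
  moreover have "p + 1 < X"
  proof -
    have "X = (p + 1) + (p + 2) / p + 1" unfolding X_def using assms by (simp add: field_simps)
    moreover have "(p + 2) / p > 0" using assms by simp
    ultimately show ?thesis by linarith
  qed
  ultimately show "local_max_point (hpN p N) (1 / 2)" using main_lm[OF assms] h by simp
next
  fix N :: nat
  assume hp: "p \<le> (9 * pi^2 + sqrt (16 - 216 * pi^2 + 81 * pi^4) - 12) / 8" and N: "N \<ge> 1"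
  have "sqrt (16 - 216 * pi^2 + 81 * pi^4) < sqrt ((9 * pi^2 + 4)^2)"
    by (intro real_sqrt_less_mono) (simp add: power2_eq_square power4_eq_xxxx algebra_simps pi_gt_zero)
  also have "\<dots> = 9 * pi^2 + 4" by simp
  finally have "p + 1 < pi^2 * (9/4)" using hp by simp
  also have "\<dots> \<le> pi^2 * (real N + 1/2)^2"
  proof -
    have "(3/2::real)^2 \<le> (real N + 1/2)^2" using N by (intro power_mono) auto
    thus ?thesis by (intro mult_left_mono) (auto simp: power2_eq_square)
  qed
  finally show "local_max_point (hpN p N) (1 / 2)" using main_lm[OF assms N] by simp
qed


end
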